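(* Let $\mathcal{X}=\mathcal{Y}=\mathcal{Z}=\mathbb{C}^2$, $u=\tfrac{1}{\sqrt2}(|00\rangle+|11\rangle)\in\mathcal{X}\otimes\mathcal{Z}$, $w_1=\cos(\pi/8)|00\rangle+\sin(\pi/8)|11\rangle\in\mathcal{Y}\otimes\mathcal{Z}$, $\Pi_1=w_1w_1^*$ and $\Pi_0=\mathbb{I}-\Pi_1$. Then: (1) $\max\{\langle \Pi_1,(\Phi\otimes\mathrm{id}_{\mathrm{L}(\mathcal{Z})})(uu^* )\rangle : \Phi \text{ a quantum channel from } \mathrm{L}(\mathcal{X}) \text{ to } \mathrm{L}(\mathcal{Y})\}=\cos^2(\pi/8)$; (2) there exists a quantum channel $\Psi$ from $\mathrm{L}(\mathcal{X}_1\otimes\mathcal{X}_2)$ to $\mathrm{L}(\mathcal{Y}_1\otimes\mathcal{Y}_2)$ (with $\mathcal{X}_i,\mathcal{Y}_i$ copies of $\mathbb{C}^2$) such that the state $\sigma=(\Psi\otimes\mathrm{id})(uu^*\otimes uu^* )$ on $(\mathcal{Y}_1\otimes\mathcal{Z}_1)\otimes(\mathcal{Y}_2\otimes\mathcal{Z}_2)$ (where the $k$-th copy of $uu^*$ lives on $\mathcal{X}_k\otimes\mathcal{Z}_k$) satisfies $\langle \Pi_1\otimes\Pi_0+\Pi_0\otimes\Pi_1,\sigma\rangle=1$. In particular, in two independent parallel copies of this one-round test the prover can obtain at least one winning outcome (outcome of $\Pi_1$) with probability $1$, although a single copy is won with probability at most $\cos^2(\pi/8)<1$.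
   Context: A quantum channel is a completely positive trace-preserving linear map. The test: the verifier prepares $u$, sends the $\mathcal{X}$ part to the prover, who applies a channel and returns a qubit in $\mathcal{Y}$; the verifier then measures $\mathcal{Y}\otimes\mathcal{Z}$ with the projective measurement $\{\Pi_0,\Pi_1\}$, outcome $\Pi_1$ being "winning". *)

theory Defs
  imports "Jordan_Normal_Form.Matrix" "HOL-Library.Complex_Order"
begin

text \<open>Tensor products are Kronecker products, with index of (A tensor B) being
  i * dim B + j (first factor most significant).\<close>

definition ctrans :: "complex mat \<Rightarrow> complex mat" where
  "ctrans A = mat (dim_col A) (dim_row A) (\<lambda>(i,j). cnj (A $$ (j,i)))"

definition mtrace :: "complex mat \<Rightarrow> complex" where
  "mtrace A = (\<Sum>i<dim_row A. A $$ (i,i))"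

definition hs_inner :: "complex mat \<Rightarrow> complex mat \<Rightarrow> complex" where
  "hs_inner A B = mtrace (ctrans A * B)"

definition outer :: "complex vec \<Rightarrow> complex vec \<Rightarrow> complex mat" where
  "outer v w = mat (dim_vec v) (dim_vec w) (\<lambda>(i,j). vec_index v i * cnj (vec_index w j))"

definition kron :: "complex mat \<Rightarrow> complex mat \<Rightarrow> complex mat" where
  "kron A B = mat (dim_row A * dim_row B) (dim_col A * dim_col B)
     (\<lambda>(i,j). A $$ (i div dim_row B, j div dim_col B) * B $$ (i mod dim_row B, j mod dim_col B))"

text \<open>Positive semidefinite n x n matrix (order on complex: 0 \<le> z iff z real nonnegative).\<close>
definition psd :: "nat \<Rightarrow> complex mat \<Rightarrow> bool" where
  "psd n A \<longleftrightarrow> A \<in> carrier_mat n n \<and>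
     (\<forall>v \<in> carrier_vec n. 0 \<le> (\<Sum>i<n. cnj (vec_index v i) * vec_index (A *\<^sub>v v) i))"

text \<open>(Phi tensor id_{L(C^k)}) applied to X in L(C^n tensor C^k), giving an element of
  L(C^m tensor C^k): the (a,b) block w.r.t. the second factor is Phi of the (a,b) block.\<close>
definition blk :: "nat \<Rightarrow> nat \<Rightarrow> complex mat \<Rightarrow> nat \<Rightarrow> nat \<Rightarrow> complex mat" where
  "blk n k X a b = mat n n (\<lambda>(x,y). X $$ (x * k + a, y * k + b))"

definition ext_id :: "(complex mat \<Rightarrow> complex mat) \<Rightarrow> nat \<Rightarrow> nat \<Rightarrow> nat \<Rightarrow> complex mat \<Rightarrow> complex mat" where
  "ext_id \<Phi> n m k X = mat (m * k) (m * k)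
     (\<lambda>(i,j). \<Phi> (blk n k X (i mod k) (j mod k)) $$ (i div k, j div k))"

definition channel :: "nat \<Rightarrow> nat \<Rightarrow> (complex mat \<Rightarrow> complex mat) \<Rightarrow> bool" where
  "channel n m \<Phi> \<longleftrightarrow>
     (\<forall>X \<in> carrier_mat n n. \<Phi> X \<in> carrier_mat m m) \<and>
     (\<forall>X \<in> carrier_mat n n. \<forall>Y \<in> carrier_mat n n. \<Phi> (X + Y) = \<Phi> X + \<Phi> Y) \<and>
     (\<forall>X \<in> carrier_mat n n. \<forall>c. \<Phi> (c \<cdot>\<^sub>m X) = c \<cdot>\<^sub>m \<Phi> X) \<and>
     (\<forall>X \<in> carrier_mat n n. mtrace (\<Phi> X) = mtrace X) \<and>
     (\<forall>k. \<forall>X. psd (n * k) X \<longrightarrow> psd (m * k) (ext_id \<Phi> n m k X))"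

text \<open>Concrete objects. Basis index of |xz> in C^2 tensor C^2 is 2x+z.\<close>
definition u_vec :: "complex vec" where
  "u_vec = vec 4 (\<lambda>i. if i = 0 \<or> i = 3 then complex_of_real (1 / sqrt 2) else 0)"

definition w1_vec :: "complex vec" where
  "w1_vec = vec 4 (\<lambda>i. if i = 0 then complex_of_real (cos (pi/8))
                       else if i = 3 then complex_of_real (sin (pi/8)) else 0)"

definition Pi1 :: "complex mat" where "Pi1 = outer w1_vec w1_vec"
definition Pi0 :: "complex mat" where "Pi0 = 1\<^sub>m 4 - Pi1"

text \<open>Permutation of four qubits swapping the 2nd and 3rd tensor factor:
  (A1 B1 A2 B2) <-> (A1 A2 B1 B2).  Index of |abcd> is 8a+4b+2c+d.\<close>
definition swap_mid :: "nat \<Rightarrow> nat" where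
  "swap_mid i = 8 * (i div 8) + 4 * ((i div 2) mod 2) + 2 * ((i div 4) mod 2) + i mod 2"

definition Pswap :: "complex mat" where
  "Pswap = mat 16 16 (\<lambda>(i,j). if j = swap_mid i then 1 else 0)"

end

theory Submission
  imports Defs
begin


lemma hs_inner_sum:
  assumes "A \<in> carrier_mat n n" "B \<in> carrier_mat n n"
  shows "hs_inner A B = (\<Sum>i<n. \<Sum>j<n. cnj (A $$ (j,i)) * B $$ (j,i))"
  using assms unfolding hs_inner_def mtrace_def ctrans_def
  by (auto simp: scalar_prod_def lessThan_atLeast0 intro!: sum.cong)

definition scal :: "(nat \<Rightarrow> complex) \<Rightarrow> nat \<Rightarrow> complex mat \<Rightarrow> complex mat" where
 "scal d n X = mat n n (\<lambda>(i,j). d i * d j * X $$ (i,j))"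

lemma psd_scale:
  assumes "psd N X" "\<forall>i. cnj (e i) = e i"
  shows "psd N (mat N N (\<lambda>(i,j). e i * e j * X $$ (i,j)))"
  unfolding psd_def
proof (intro conjI ballI)
  show "mat N N (\<lambda>(i,j). e i * e j * X $$ (i,j)) \<in> carrier_mat N N" by simp
  fix v :: "complex vec" assume v: "v \<in> carrier_vec N"
  define v' where "v' = vec N (\<lambda>i. e i * v $ i)"
  have X: "X \<in> carrier_mat N N" using assms(1) psd_def by blast
  have v'c: "v' \<in> carrier_vec N" by (simp add: v'_def)
  have "0 \<le> (\<Sum>i<N. cnj (v' $ i) * (X *\<^sub>v v') $ i)"
    using assms(1) v'c unfolding psd_def by blast
  also have "\<dots> = (\<Sum>i<N. cnj (v $ i) * (mat N N (\<lambda>(i,j). e i * e j * X $$ (i,j)) *\<^sub>v v) $ i)"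
  proof (rule sum.cong[OF refl])
    fix i assume i: "i \<in> {..<N}"
    have "cnj (v' $ i) * (X *\<^sub>v v') $ i = cnj (v $ i) * e i * (\<Sum>j<N. X $$ (i,j) * (e j * v $ j))"
      using i X v assms(2) by (simp add: v'_def scalar_prod_def lessThan_atLeast0 mult.commute)
    also have "\<dots> = cnj (v $ i) * (\<Sum>j<N. e i * e j * X $$ (i,j) * v $ j)"
      by (simp add: sum_distrib_left mult.assoc mult.left_commute)
    also have "\<dots> = cnj (v $ i) * (mat N N (\<lambda>(i,j). e i * e j * X $$ (i,j)) *\<^sub>v v) $ i"
      using i v by (simp add: scalar_prod_def lessThan_atLeast0)
    finally show "cnj (v' $ i) * (X *\<^sub>v v') $ i = cnj (v $ i) * (mat N N (\<lambda>(i,j). e i * e j * X $$ (i,j)) *\<^sub>v v) $ i" .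
  qed
  finally show "0 \<le> (\<Sum>i<N. cnj (v $ i) * (mat N N (\<lambda>(i,j). e i * e j * X $$ (i,j)) *\<^sub>v v) $ i)" .
qed

lemma ext_scal:
  assumes "X \<in> carrier_mat (n*k) (n*k)"
  shows "ext_id (scal d n) n n k X = mat (n*k) (n*k) (\<lambda>(i,j). d (i div k) * d (j div k) * X $$ (i,j))"
proof (rule eq_matI)
  fix i j assume i: "i < dim_row (mat (n*k) (n*k) (\<lambda>(i,j). d (i div k) * d (j div k) * X $$ (i,j)))"
    and j: "j < dim_col (mat (n*k) (n*k) (\<lambda>(i,j). d (i div k) * d (j div k) * X $$ (i,j)))"
  then have i': "i < n*k" and j': "j < n*k" by auto
  have id: "i div k < n" "j div k < n" using i' j' by (simp_all add: less_mult_imp_div_less)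
  have k: "k > 0" using i' by (cases k) auto
  have "i div k * k + i mod k = i" "j div k * k + j mod k = j" by simp_all
  then show "ext_id (scal d n) n n k X $$ (i, j) = mat (n*k) (n*k) (\<lambda>(i,j). d (i div k) * d (j div k) * X $$ (i,j)) $$ (i,j)"
    using i' j' id k by (simp add: ext_id_def scal_def blk_def)
qed (auto simp: ext_id_def)

lemma channel_scal:
  assumes "\<forall>i. cnj (d i) = d i" "\<forall>i. d i * d i = 1"
  shows "channel n n (scal d n)"
  unfolding channel_def
proof (intro conjI ballI allI impI)
  fix X :: "complex mat" assume "X \<in> carrier_mat n n" then show "scal d n X \<in> carrier_mat n n" by (simp add: scal_def)
next
  fix X Y :: "complex mat" assume "X \<in> carrier_mat n n" "Y \<in> carrier_mat n n"
  then show "scal d n (X + Y) = scal d n X + scal d n Y"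
    by (intro eq_matI) (auto simp: scal_def distrib_left)
next
  fix X :: "complex mat" and c assume "X \<in> carrier_mat n n"
  then show "scal d n (c \<cdot>\<^sub>m X) = c \<cdot>\<^sub>m scal d n X"
    by (intro eq_matI) (auto simp: scal_def)
next
  fix X :: "complex mat" assume "X \<in> carrier_mat n n"
  then show "mtrace (scal d n X) = mtrace X"
    using assms by (auto simp: scal_def mtrace_def mult.assoc[symmetric] intro!: sum.cong)
next
  fix k and X :: "complex mat" assume "psd (n*k) X"
  then show "psd (n*k) (ext_id (scal d n) n n k X)"
  proof -
    have X: "X \<in> carrier_mat (n*k) (n*k)" using \<open>psd (n*k) X\<close> psd_def by blast
    have "psd (n*k) (mat (n*k) (n*k) (\<lambda>(i,j). d (i div k) * d (j div k) * X $$ (i,j)))"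
      by (rule psd_scale) (use assms \<open>psd (n*k) X\<close> in auto)
    then show ?thesis using ext_scal[OF X] by simp
  qed
qed



lemma cs_facts:
  shows "cos (pi/8) > 0" "sin (pi/8) > 0" "(cos (pi/8))^2 + (sin (pi/8))^2 = 1"
    "2 * cos (pi/8) * sin (pi/8) = 2 * (cos (pi/8))^2 - 1"
proof -
  show "cos (pi/8) > 0" by (rule cos_gt_zero_pi) (use pi_gt_zero in linarith)+
  show "sin (pi/8) > 0" by (rule sin_gt_zero) (use pi_gt_zero in linarith)+
  show "(cos (pi/8))^2 + (sin (pi/8))^2 = 1" by simp
  have "sin (2*(pi/8)) = cos (2*(pi/8))" using sin_45 cos_45 by simp
  then show "2 * cos (pi/8) * sin (pi/8) = 2 * (cos (pi/8))^2 - 1"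
    by (simp only: sin_double cos_double_cos) (simp add: mult_ac)
qed

lemma sum4: "(\<Sum>i<(4::nat). f i) = f 0 + f 1 + f 2 + (f 3 :: complex)"
  by (simp add: eval_nat_numeral)

lemma part1:
  "hs_inner Pi1 (ext_id (scal (\<lambda>_. 1) 2) 2 2 2 (outer u_vec u_vec)) = complex_of_real ((cos (pi/8))\<^sup>2)"
proof -
  have uc: "outer u_vec u_vec \<in> carrier_mat (2*2) (2*2)" by (simp add: outer_def u_vec_def)
  have "hs_inner Pi1 (ext_id (scal (\<lambda>_. 1) 2) 2 2 2 (outer u_vec u_vec)) =
     (\<Sum>i<4. \<Sum>j<4. cnj (Pi1 $$ (j,i)) * outer u_vec u_vec $$ (j,i))"
    by (subst ext_scal[OF uc], subst hs_inner_sum[where n=4]) (auto simp: Pi1_def outer_def w1_vec_def u_vec_def)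
  also have "\<dots> = complex_of_real ((1 + 2 * cos (pi/8) * sin (pi/8)) / 2)"
    using cs_facts(3) by (simp add: sum4 Pi1_def outer_def w1_vec_def u_vec_def power2_eq_square algebra_simps flip: of_real_mult of_real_add) simp
  also have "\<dots> = complex_of_real ((cos (pi/8))\<^sup>2)"
    using cs_facts(4) by simp
  finally show ?thesis .
qed



lemma psd_outer:
  assumes "v \<in> carrier_vec n" shows "psd n (outer v v)"
  unfolding psd_def
proof (intro conjI ballI)
  show "outer v v \<in> carrier_mat n n" using assms by (simp add: outer_def)
  fix x :: "complex vec" assume x: "x \<in> carrier_vec n"
  define z where "z = (\<Sum>j<n. cnj (v $ j) * x $ j)"
  have "(\<Sum>i<n. cnj (x $ i) * (outer v v *\<^sub>v x) $ i) = (\<Sum>i<n. cnj (x $ i) * v $ i * z)"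
    using assms x by (auto simp: outer_def scalar_prod_def lessThan_atLeast0 z_def sum_distrib_left mult_ac intro!: sum.cong)
  also have "\<dots> = cnj z * z" unfolding z_def by (simp add: sum_distrib_right mult_ac)
  also have "\<dots> = complex_of_real ((Re z)^2 + (Im z)^2)"
    by (simp add: complex_mult_cnj mult.commute)
  also have "0 \<le> \<dots>" by (simp only: less_eq_complex_def) simp
  finally show "0 \<le> (\<Sum>i<n. cnj (x $ i) * (outer v v *\<^sub>v x) $ i)" by simp
qed

lemma psd_test:
  assumes "psd n A" "v \<in> carrier_vec n"
  shows "0 \<le> (\<Sum>i<n. cnj (v $ i) * (\<Sum>j<n. A $$ (i,j) * v $ j))"
proof -
  have A: "A \<in> carrier_mat n n" using assms psd_def by blast
  have "0 \<le> (\<Sum>i<n. cnj (v $ i) * (A *\<^sub>v v) $ i)" using assms psd_def by blast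
  also have "\<dots> = (\<Sum>i<n. cnj (v $ i) * (\<Sum>j<n. A $$ (i,j) * v $ j))"
    using A assms(2) by (auto simp: scalar_prod_def lessThan_atLeast0 intro!: sum.cong)
  finally show ?thesis .
qed

lemma part2:
  assumes ch: "channel 2 2 \<Phi>"
  shows "hs_inner Pi1 (ext_id \<Phi> 2 2 2 (outer u_vec u_vec)) \<le> complex_of_real ((cos (pi/8))\<^sup>2)"
proof -
  define X where "X = outer u_vec u_vec"
  define R where "R = ext_id \<Phi> 2 2 2 X"
  have psdX: "psd (2*2) X" unfolding X_def by (rule psd_outer) (simp add: u_vec_def)
  have "psd (2*2) (ext_id \<Phi> 2 2 2 X)" using ch psdX unfolding channel_def by blast
  then have psdR: "psd 4 R" unfolding R_def by simp
  have Rc: "R \<in> carrier_mat 4 4" using psdR psd_def by blast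
  define B0 where "B0 = blk 2 2 X 0 0"
  define B1 where "B1 = blk 2 2 X 1 1"
  have B0c: "B0 \<in> carrier_mat 2 2" and B1c: "B1 \<in> carrier_mat 2 2" by (simp_all add: B0_def B1_def blk_def)
  have trB0: "mtrace B0 = 1/2" and trB1: "mtrace B1 = 1/2"
    by (simp_all add: B0_def B1_def blk_def X_def outer_def u_vec_def mtrace_def eval_nat_numeral
        flip: of_real_mult)
  have PB0: "\<Phi> B0 \<in> carrier_mat 2 2" "mtrace (\<Phi> B0) = mtrace B0"
    using ch B0c unfolding channel_def by auto
  have PB1: "\<Phi> B1 \<in> carrier_mat 2 2" "mtrace (\<Phi> B1) = mtrace B1"
    using ch B1c unfolding channel_def by auto
  have e: "R $$ (0,0) = \<Phi> B0 $$ (0,0)" "R $$ (2,2) = \<Phi> B0 $$ (1,1)"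
     "R $$ (1,1) = \<Phi> B1 $$ (0,0)" "R $$ (3,3) = \<Phi> B1 $$ (1,1)"
    by (simp_all add: R_def ext_id_def B0_def B1_def)
  have m: "mtrace (\<Phi> B0) = \<Phi> B0 $$ (0,0) + \<Phi> B0 $$ (1,1)"
     "mtrace (\<Phi> B1) = \<Phi> B1 $$ (0,0) + \<Phi> B1 $$ (1,1)"
    using PB0(1) PB1(1) by (simp_all add: mtrace_def eval_nat_numeral)
  have t1: "R $$ (0,0) + R $$ (2,2) = 1/2"
    using PB0 trB0 e m by simp
  have t2: "R $$ (1,1) + R $$ (3,3) = 1/2"
    using PB1 trB1 e m by simp
  have f1: "0 \<le> R $$ (1,1)"
    using psd_test[OF psdR, of "vec 4 (\<lambda>i. if i = 1 then 1 else 0)"] by (simp add: sum4)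
  have f2: "0 \<le> R $$ (2,2)"
    using psd_test[OF psdR, of "vec 4 (\<lambda>i. if i = 2 then 1 else 0)"] by (simp add: sum4)
  have f3: "0 \<le> R $$ (0,0) - R $$ (0,3) - R $$ (3,0) + R $$ (3,3)"
    using psd_test[OF psdR, of "vec 4 (\<lambda>i. if i = 0 then 1 else if i = 3 then -1 else 0)"]
    by (simp add: sum4 algebra_simps)
  define c where "c = cos (pi/8)"
  define s where "s = sin (pi/8)"
  have V: "hs_inner Pi1 R = complex_of_real (c*c) * R $$ (0,0) + complex_of_real (c*s) * (R $$ (0,3) + R $$ (3,0))
      + complex_of_real (s*s) * R $$ (3,3)"
    by (subst hs_inner_sum[where n=4]) (use Rc in \<open>auto simp: Pi1_def outer_def w1_vec_def sum4 c_def s_def algebra_simps\<close>)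
  have cs: "c > 0" "s > 0" "c^2 + s^2 = 1" "2*c*s = 2*c^2 - 1" using cs_facts by (auto simp: c_def s_def)
  have I: "Im (R $$ (1,1)) = 0" "Im (R $$ (2,2)) = 0" "Im (R $$ (0,0) - R $$ (0,3) - R $$ (3,0) + R $$ (3,3)) = 0"
    using f1 f2 f3 by (auto simp: less_eq_complex_def)
  have Re: "Re (R $$ (1,1)) \<ge> 0" "Re (R $$ (2,2)) \<ge> 0" "Re (R $$ (0,0) - R $$ (0,3) - R $$ (3,0) + R $$ (3,3)) \<ge> 0"
    using f1 f2 f3 by (auto simp: less_eq_complex_def)
  have t1': "Re (R $$ (0,0)) + Re (R $$ (2,2)) = 1/2" "Im (R $$ (0,0)) + Im (R $$ (2,2)) = 0"
    using arg_cong[OF t1, of Re] arg_cong[OF t1, of Im] by simp_all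
  have t2': "Re (R $$ (1,1)) + Re (R $$ (3,3)) = 1/2" "Im (R $$ (1,1)) + Im (R $$ (3,3)) = 0"
    using arg_cong[OF t2, of Re] arg_cong[OF t2, of Im] by simp_all
  define a where "a = Re (R $$ (0,0))"
  define b where "b = Re (R $$ (3,3))"
  define r where "r = Re (R $$ (0,3)) + Re (R $$ (3,0))"
  have ab: "a \<le> 1/2" "b \<le> 1/2" "r \<le> a + b" using Re t1' t2' unfolding a_def b_def r_def by auto
  have ImV0: "Im (hs_inner Pi1 R) = c*c*Im (R $$ (0,0)) + c*s*(Im (R $$ (0,3)) + Im (R $$ (3,0))) + s*s*Im (R $$ (3,3))"
    by (simp add: V algebra_simps)
  have ImV: "Im (hs_inner Pi1 R) = 0"
    using I t1' t2' unfolding ImV0 by simp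
  have ReV: "Re (hs_inner Pi1 R) = c*c*a + c*s*r + s*s*b"
    by (simp add: V a_def b_def r_def algebra_simps)
  have "c*s*r \<le> c*s*(a+b)" using ab cs by (intro mult_left_mono) auto
  moreover have "(c*c + c*s)*a \<le> (c*c+c*s)*(1/2)" using ab cs by (intro mult_left_mono) auto
  moreover have "(s*s + c*s)*b \<le> (s*s+c*s)*(1/2)" using ab cs by (intro mult_left_mono) auto
  ultimately have "Re (hs_inner Pi1 R) \<le> c^2" using cs(3,4) unfolding ReV
    by (simp add: algebra_simps power2_eq_square)
  then show ?thesis using ImV unfolding R_def X_def c_def less_eq_complex_def by simp
qed



lemma less16_cases: "i < (16::nat) \<Longrightarrow> i \<in> {0,1,2,3,4,5,6,7,8,9,10,11,12,13,14,15}"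
  by (simp add: less_Suc_eq eval_nat_numeral)

lemma swap_lt: "i < 16 \<Longrightarrow> swap_mid i < 16"
  using less16_cases[of i] by (auto simp: swap_mid_def)

lemma swap_inv: "i < 16 \<Longrightarrow> swap_mid (swap_mid i) = i"
  using less16_cases[of i] by (auto simp: swap_mid_def)

lemma Pswap_c: "Pswap \<in> carrier_mat 16 16" by (simp add: Pswap_def)

lemma Pswap_left:
  assumes "A \<in> carrier_mat 16 n" "i < 16" "l < n"
  shows "(Pswap * A) $$ (i,l) = A $$ (swap_mid i, l)"
proof -
  have "(Pswap * A) $$ (i,l) = (\<Sum>m<16. (if m = swap_mid i then 1 else 0) * A $$ (m,l))"
    using assms by (simp add: Pswap_def scalar_prod_def lessThan_atLeast0)
  also have "\<dots> = (\<Sum>m<16. if m = swap_mid i then A $$ (m,l) else 0)"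
    by (rule sum.cong) auto
  also have "\<dots> = A $$ (swap_mid i, l)" using swap_lt[OF assms(2)] by simp
  finally show ?thesis .
qed

lemma Pswap_right:
  assumes "A \<in> carrier_mat n 16" "i < n" "j < 16"
  shows "(A * transpose_mat Pswap) $$ (i,j) = A $$ (i, swap_mid j)"
proof -
  have "(A * transpose_mat Pswap) $$ (i,j) = (\<Sum>m<16. A $$ (i,m) * (if m = swap_mid j then 1 else 0))"
    using assms by (simp add: Pswap_def scalar_prod_def lessThan_atLeast0)
  also have "\<dots> = (\<Sum>m<16. if m = swap_mid j then A $$ (i,m) else 0)"
    by (rule sum.cong) auto
  also have "\<dots> = A $$ (i, swap_mid j)" using swap_lt[OF assms(3)] by simp
  finally show ?thesis .
qed

lemma conj_swap:
  assumes "A \<in> carrier_mat 16 16" "i < 16" "j < 16"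
  shows "(Pswap * A * transpose_mat Pswap) $$ (i,j) = A $$ (swap_mid i, swap_mid j)"
proof -
  have "Pswap * A \<in> carrier_mat 16 16" using assms Pswap_c by auto
  then show ?thesis using assms Pswap_right Pswap_left swap_lt by simp
qed

lemma conj_swap_c: "A \<in> carrier_mat 16 16 \<Longrightarrow> Pswap * A * transpose_mat Pswap \<in> carrier_mat 16 16"
  using Pswap_c by auto

lemma uu: "i < 16 \<Longrightarrow> u_vec $ (i div 4) * u_vec $ (i mod 4) = (if i \<in> {0,3,12,15} then 1/2 else 0)"
  using less16_cases[of i] by (auto simp: u_vec_def simp flip: of_real_mult)

definition d3 :: "nat \<Rightarrow> complex" where "d3 i = (if i = 0 then 1 else -1)"



definition R2 :: complex where "R2 = complex_of_real (sqrt 2)"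

lemma real_vals: "cos (pi/8) * cos (pi/8) = (2 + sqrt 2)/4" "sin (pi/8) * sin (pi/8) = (2 - sqrt 2)/4"
   "cos (pi/8) * sin (pi/8) = sqrt 2 / 4"
proof -
  have a: "cos (pi/8) * cos (pi/8) = (2 + sqrt 2)/4"
    using cos_double_cos[of "pi/8"] cos_45 by (simp add: power2_eq_square field_simps)
  then show "cos (pi/8) * cos (pi/8) = (2 + sqrt 2)/4" .
  have b: "cos (pi/8) * cos (pi/8) + sin (pi/8) * sin (pi/8) = 1" using cs_facts(3) by (simp add: power2_eq_square)
  have "sin (pi/8) * sin (pi/8) = 1 - cos (pi/8) * cos (pi/8)" using b by (simp add: algebra_simps)
  then show "sin (pi/8) * sin (pi/8) = (2 - sqrt 2)/4" using a by (simp add: field_simps)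
  show "cos (pi/8) * sin (pi/8) = sqrt 2 / 4"
    using sin_double[of "pi/8"] sin_45 by (simp add: mult_ac)
qed

lemma Pdims: "dim_row Pi1 = 4" "dim_col Pi1 = 4" "dim_row Pi0 = 4" "dim_col Pi0 = 4"
  by (simp_all add: Pi1_def Pi0_def outer_def w1_vec_def)

lemma Pvals:
  "Pi1 $$ (0,0) = (2 + R2)/4" "Pi1 $$ (0,3) = R2/4" "Pi1 $$ (3,0) = R2/4" "Pi1 $$ (3,3) = (2 - R2)/4"
  "Pi0 $$ (0,0) = (2 - R2)/4" "Pi0 $$ (0,3) = - R2/4" "Pi0 $$ (3,0) = - R2/4" "Pi0 $$ (3,3) = (2 + R2)/4"
proof -
  have e: "Pi1 $$ (0,0) = complex_of_real (cos (pi/8) * cos (pi/8))"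
    "Pi1 $$ (0,3) = complex_of_real (cos (pi/8) * sin (pi/8))"
    "Pi1 $$ (3,0) = complex_of_real (cos (pi/8) * sin (pi/8))"
    "Pi1 $$ (3,3) = complex_of_real (sin (pi/8) * sin (pi/8))"
    by (simp_all add: Pi1_def outer_def w1_vec_def mult.commute)
  have f: "Pi0 $$ (i,j) = (if i = j then 1 else 0) - Pi1 $$ (i,j)" if "i < 4" "j < 4" for i j
    using that by (simp add: Pi0_def Pdims)
  show "Pi1 $$ (0,0) = (2 + R2)/4" "Pi1 $$ (0,3) = R2/4" "Pi1 $$ (3,0) = R2/4" "Pi1 $$ (3,3) = (2 - R2)/4"
    unfolding e real_vals R2_def by simp_all
  then show "Pi0 $$ (0,0) = (2 - R2)/4" "Pi0 $$ (0,3) = - R2/4" "Pi0 $$ (3,0) = - R2/4" "Pi0 $$ (3,3) = (2 + R2)/4"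
    by (simp_all add: f field_simps)
qed

lemma cnjR2: "cnj R2 = R2" unfolding R2_def by simp

lemma R2sq: "R2 * R2 = 2" unfolding R2_def by (simp flip: of_real_mult)

lemma channel3: "channel 4 4 (scal d3 4)"
  by (rule channel_scal) (auto simp: d3_def)

lemma part3:
  "hs_inner (kron Pi1 Pi0 + kron Pi0 Pi1)
            (Pswap * ext_id (scal d3 4) 4 4 4
               (Pswap * kron (outer u_vec u_vec) (outer u_vec u_vec) * transpose_mat Pswap)
             * transpose_mat Pswap) = 1"
proof -
  define K where "K = kron (outer u_vec u_vec) (outer u_vec u_vec)"
  define P where "P = kron Pi1 Pi0 + kron Pi0 Pi1"
  have Kc: "K \<in> carrier_mat 16 16" by (simp add: K_def kron_def outer_def u_vec_def)
  have Pc: "P \<in> carrier_mat 16 16" by (simp add: P_def kron_def Pi1_def Pi0_def outer_def w1_vec_def)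
  define Xs where "Xs = Pswap * K * transpose_mat Pswap"
  have Xsc: "Xs \<in> carrier_mat (4*4) (4*4)" using conj_swap_c[OF Kc] by (simp add: Xs_def)
  define E where "E = ext_id (scal d3 4) 4 4 4 Xs"
  have E: "E = mat 16 16 (\<lambda>(i,j). d3 (i div 4) * d3 (j div 4) * Xs $$ (i,j))"
    unfolding E_def by (subst ext_scal[OF Xsc]) simp
  have Ec: "E \<in> carrier_mat 16 16" by (simp add: E)
  define gg where "gg i = d3 (swap_mid i div 4) * (if i \<in> {0,3,12,15} then 1/2 else (0::complex))" for i
  have F: "(Pswap * E * transpose_mat Pswap) $$ (j,i) = gg j * gg i" if "i < 16" "j < 16" for i j
  proof -
    have "(Pswap * E * transpose_mat Pswap) $$ (j,i) = E $$ (swap_mid j, swap_mid i)"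
      using conj_swap[OF Ec] that by simp
    also have "\<dots> = d3 (swap_mid j div 4) * d3 (swap_mid i div 4) * Xs $$ (swap_mid j, swap_mid i)"
      using that swap_lt by (simp add: E)
    also have "Xs $$ (swap_mid j, swap_mid i) = K $$ (j, i)"
      using conj_swap[OF Kc] that swap_lt swap_inv by (simp add: Xs_def)
    also have "K $$ (j,i) = (u_vec $ (j div 4) * u_vec $ (j mod 4)) * (u_vec $ (i div 4) * u_vec $ (i mod 4))"
      using that by (simp add: K_def kron_def outer_def u_vec_def less_mult_imp_div_less)
    finally show ?thesis using that by (simp add: uu gg_def mult_ac)
  qed
  have h1: "hs_inner P (Pswap * E * transpose_mat Pswap) = (\<Sum>i<16. \<Sum>j<16. cnj (P $$ (j,i)) * (gg j * gg i))"
    using Pc conj_swap_c[OF Ec] F by (simp add: hs_inner_sum[where n=16])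
  have gz: "gg i = 0" if "i \<notin> {0,3,12,15}" for i using that by (simp add: gg_def)
  have h2: "(\<Sum>i<16. \<Sum>j<16. cnj (P $$ (j,i)) * (gg j * gg i)) = (\<Sum>i<16. \<Sum>j\<in>{0,3,12,15}. cnj (P $$ (j,i)) * (gg j * gg i))"
    by (rule sum.cong[OF refl], rule sum.mono_neutral_right) (auto simp: gz)
  have h3: "\<dots> = (\<Sum>i\<in>{0,3,12,15}. \<Sum>j\<in>{0,3,12,15}. cnj (P $$ (j,i)) * (gg j * gg i))"
    by (rule sum.mono_neutral_right) (auto simp: gz)
  have h4: "(\<Sum>i\<in>{0,3,12,15}. \<Sum>j\<in>{0,3,12,15}. cnj (P $$ (j,i)) * (gg j * gg i)) = 1"
    apply (simp add: gg_def d3_def swap_mid_def P_def kron_def Pdims cnjR2 Pvals)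
    apply (simp add: field_simps R2sq)
    done
  show ?thesis using h1 h2 h3 h4 unfolding P_def E_def Xs_def K_def by simp
qed


theorem mainTheorem2:
  shows "complex_of_real ((cos (pi/8))\<^sup>2) \<in>
           {hs_inner Pi1 (ext_id \<Phi> 2 2 2 (outer u_vec u_vec)) | \<Phi>. channel 2 2 \<Phi>}
     \<and> (\<forall>\<Phi>. channel 2 2 \<Phi> \<longrightarrow>
           hs_inner Pi1 (ext_id \<Phi> 2 2 2 (outer u_vec u_vec)) \<le> complex_of_real ((cos (pi/8))\<^sup>2))
     \<and> (\<exists>\<Psi>. channel 4 4 \<Psi> \<and>
          hs_inner (kron Pi1 Pi0 + kron Pi0 Pi1)
            (Pswap * ext_id \<Psi> 4 4 4
               (Pswap * kron (outer u_vec u_vec) (outer u_vec u_vec) * transpose_mat Pswap)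
             * transpose_mat Pswap) = 1)"
proof (intro conjI allI impI)
  have "channel 2 2 (scal (\<lambda>_. 1) 2)" by (rule channel_scal) auto
  then show "complex_of_real ((cos (pi/8))\<^sup>2) \<in>
           {hs_inner Pi1 (ext_id \<Phi> 2 2 2 (outer u_vec u_vec)) | \<Phi>. channel 2 2 \<Phi>}"
    using part1 by force
next
  fix \<Phi> assume "channel 2 2 \<Phi>"
  then show "hs_inner Pi1 (ext_id \<Phi> 2 2 2 (outer u_vec u_vec)) \<le> complex_of_real ((cos (pi/8))\<^sup>2)"
    by (rule part2)
next
  show "\<exists>\<Psi>. channel 4 4 \<Psi> \<and>
          hs_inner (kron Pi1 Pi0 + kron Pi0 Pi1)
            (Pswap * ext_id \<Psi> 4 4 4
               (Pswap * kron (outer u_vec u_vec) (outer u_vec u_vec) * transpose_mat Pswap)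
             * transpose_mat Pswap) = 1"
    using channel3 part3 by blast
qed

end
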